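(* For the propositional CNF formula $MAP_n^1$ (defined in the context), every resolution refutation of $MAP_n^1$ has size exponential in $n$.
   Context: MAP planning domain. Fix $n\ge 2$. The map is an undirected graph with $3n-3$ nodes: a centre $L^0$; a path (branch 1) $L^0 - L_1^1 - L_1^2 - \dots - L_1^{2n-3}$; and, for each $i=2,\dots,n$, a single node $L_i^1$ adjacent to $L^0$. Facts are $at\text{-}x$ and $visited\text{-}x$ for nodes $x$. For every edge $\{x,y\}$ and both orientations there is an action $move\text{-}x\text{-}y$ with precondition $\{at\text{-}x\}$, add effects $\{at\text{-}y, visited\text{-}y\}$ and delete effect $\{at\text{-}x\}$. The initial state is $\{at\text{-}L^0\}$. For $k\in\{1,3,\dots,2n-3\}$ the goal of task $MAP_n^k$ is: for $k=1$, $\{visited\text{-}L_1^1,\dots,visited\text{-}L_n^1\}$; each increase of $k$ by 2 moves the branch-1 goal two steps further out along branch 1 (the goal becomes $visited\text{-}L_1^k$) and drops one of the goals $visited\text{-}L_i^1$, $i\ge 2$; for $k=2n-3$ the goal is $\{visited\text{-}L_1^{2n-3}, visited\text{-}L_2^1\}$. The CNF formula $MAP_n^k$ is the standard Graphplan-based (Blackbox-style) SAT encoding of task $MAP_n^k$ with $T=2n-2$ time steps (one fewer than the length $2n-1$ of a shortest plan, so the formula is unsatisfiable). Build the Graphplan planning graph from the initial state, with a NOOP action $NOOP\text{-}p$ (precondition $\{p\}$, add $\{p\}$) for every fact $p$. For each time step $t=1,\dots,T$ there is a Boolean variable $a(t)$ for every action $a$ (including NOOPs) present in action layer $t$ of the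 planning graph. Clauses: (i) goal clauses: for each goal fact $g$, the clause $\{a(T): g\in add(a)\}$; (ii) precondition clauses: for each variable $a(t)$ with $t\ge 2$ and each $p\in pre(a)$, the clause $\{\neg a(t)\}\cup\{a'(t-1): p\in add(a')\}$; (iii) mutex clauses $\{\neg a(t),\neg a'(t)\}$ for each pair of actions that Graphplan marks mutually exclusive at layer $t$ (interference: one deletes a precondition or add effect of the other; or competing needs: mutually exclusive preconditions). In this encoding any two move actions at the same time step are mutually exclusive. A resolution refutation is a derivation of the empty clause by the resolution rule; its size is the number of clauses in it. *)

theory Defs
  imports Complex_Main
begin

record ('f, 'a) strips =
  acts  :: "'a set"            (* all actions, NOOPs included *)
  pre   :: "'a \<Rightarrow> 'f set"
  adds  :: "'a \<Rightarrow> 'f set"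
  dels  :: "'a \<Rightarrow> 'f set"
  init  :: "'f set"
  goal  :: "'f set"

definition act_layer :: "('f,'a) strips \<Rightarrow> 'f set \<Rightarrow> ('f \<times> 'f) set \<Rightarrow> 'a set" where
  "act_layer P F M = {a \<in> acts P. pre P a \<subseteq> F \<and> (\<forall>p\<in>pre P a. \<forall>q\<in>pre P a. (p, q) \<notin> M)}"

definition interfere :: "('f,'a) strips \<Rightarrow> 'a \<Rightarrow> 'a \<Rightarrow> bool" where
  "interfere P a b \<longleftrightarrow>
     dels P a \<inter> (pre P b \<union> adds P b) \<noteq> {} \<or> dels P b \<inter> (pre P a \<union> adds P a) \<noteq> {}"

definition act_mutex :: "('f,'a) strips \<Rightarrow> ('f \<times> 'f) set \<Rightarrow> 'a \<Rightarrow> 'a \<Rightarrow> bool" where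
  "act_mutex P M a b \<longleftrightarrow> a \<noteq> b \<and>
     (interfere P a b \<or> (\<exists>p\<in>pre P a. \<exists>q\<in>pre P b. (p, q) \<in> M))"

fun fact_layer :: "('f,'a) strips \<Rightarrow> nat \<Rightarrow> 'f set \<times> ('f \<times> 'f) set" where
  "fact_layer P 0 = (init P, {})"
| "fact_layer P (Suc t) =
     (let F = fst (fact_layer P t); M = snd (fact_layer P t); A = act_layer P F M;
          F' = \<Union> (adds P ` A)
      in (F', {(p, q). p \<in> F' \<and> q \<in> F' \<and>
                 (\<forall>a\<in>A. \<forall>b\<in>A. p \<in> adds P a \<longrightarrow> q \<in> adds P b \<longrightarrow> act_mutex P M a b)}))"

definition actions_at :: "('f,'a) strips \<Rightarrow> nat \<Rightarrow> 'a set" where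
  "actions_at P t = act_layer P (fst (fact_layer P (t - 1))) (snd (fact_layer P (t - 1)))"

definition mutex_at :: "('f,'a) strips \<Rightarrow> nat \<Rightarrow> 'a \<Rightarrow> 'a \<Rightarrow> bool" where
  "mutex_at P t a b = act_mutex P (snd (fact_layer P (t - 1))) a b"

datatype 'v lit = Pos 'v | Neg 'v

fun negate :: "'v lit \<Rightarrow> 'v lit" where
  "negate (Pos v) = Neg v"
| "negate (Neg v) = Pos v"

type_synonym 'v clause = "'v lit set"

text \<open>The Blackbox-style encoding with T time steps; variable (a, t) stands for a(t).\<close>
definition graphplan_cnf :: "('f,'a) strips \<Rightarrow> nat \<Rightarrow> ('a \<times> nat) clause set" where
  "graphplan_cnf P T =
     {{Pos (a, T) | a. a \<in> actions_at P T \<and> g \<in> adds P a} | g. g \<in> goal P}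
   \<union> {insert (Neg (a, t)) {Pos (a', t - 1) | a'. a' \<in> actions_at P (t - 1) \<and> p \<in> adds P a'}
       | a t p. 2 \<le> t \<and> t \<le> T \<and> a \<in> actions_at P t \<and> p \<in> pre P a}
   \<union> {{Neg (a, t), Neg (b, t)} | a b t. 1 \<le> t \<and> t \<le> T \<and> a \<in> actions_at P t \<and>
        b \<in> actions_at P t \<and> mutex_at P t a b}"

definition resolvent :: "'v clause \<Rightarrow> 'v clause \<Rightarrow> 'v clause \<Rightarrow> bool" where
  "resolvent C D E \<longleftrightarrow> (\<exists>l. l \<in> C \<and> negate l \<in> D \<and> E = (C - {l}) \<union> (D - {negate l}))"

text \<open>A resolution refutation: a sequence of clauses, each an input clause or a resolvent
  of two earlier ones, ending with the empty clause. Its size is its length.\<close>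
definition refutation :: "'v clause set \<Rightarrow> 'v clause list \<Rightarrow> bool" where
  "refutation F R \<longleftrightarrow> R \<noteq> [] \<and> last R = {} \<and>
     (\<forall>i < length R. R ! i \<in> F \<or> (\<exists>j < i. \<exists>k < i. resolvent (R ! j) (R ! k) (R ! i)))"

text \<open>L0 is the centre; L i j is node L_i^j (branch i, depth j).\<close>
datatype node = L0 | L nat nat

datatype fact = At node | Visited node

datatype action = Move node node | Noop fact

definition map_nodes :: "nat \<Rightarrow> node set" where
  "map_nodes n = {L0} \<union> {L 1 j | j. 1 \<le> j \<and> j \<le> 2 * n - 3} \<union> {L i 1 | i. 2 \<le> i \<and> i \<le> n}"

definition map_adj0 :: "nat \<Rightarrow> node \<Rightarrow> node \<Rightarrow> bool" where
  "map_adj0 n x y \<longleftrightarrow>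
     (x = L0 \<and> (\<exists>i. 1 \<le> i \<and> i \<le> n \<and> y = L i 1)) \<or>
     (\<exists>j. 1 \<le> j \<and> j + 1 \<le> 2 * n - 3 \<and> x = L 1 j \<and> y = L 1 (j + 1))"

definition map_edge :: "nat \<Rightarrow> node \<Rightarrow> node \<Rightarrow> bool" where
  "map_edge n x y \<longleftrightarrow> map_adj0 n x y \<or> map_adj0 n y x"

definition map_facts :: "nat \<Rightarrow> fact set" where
  "map_facts n = {At x | x. x \<in> map_nodes n} \<union> {Visited x | x. x \<in> map_nodes n}"

fun map_pre :: "action \<Rightarrow> fact set" where
  "map_pre (Move x y) = {At x}"
| "map_pre (Noop p) = {p}"

fun map_add :: "action \<Rightarrow> fact set" where
  "map_add (Move x y) = {At y, Visited y}"
| "map_add (Noop p) = {p}"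

fun map_del :: "action \<Rightarrow> fact set" where
  "map_del (Move x y) = {At x}"
| "map_del (Noop p) = {}"

definition map_task1 :: "nat \<Rightarrow> (fact, action) strips" where
  "map_task1 n = \<lparr> acts = {Move x y | x y. map_edge n x y} \<union> {Noop p | p. p \<in> map_facts n},
                  pre = map_pre, adds = map_add, dels = map_del,
                  init = {At L0},
                  goal = {Visited (L i 1) | i. 1 \<le> i \<and> i \<le> n} \<rparr>"

definition MAP1_cnf :: "nat \<Rightarrow> (action \<times> nat) clause set" where
  "MAP1_cnf n = graphplan_cnf (map_task1 n) (2 * n - 2)"

end

theory Submission
  imports Defs
begin
lemma run_sound:
  fixes P :: "('f,'a) strips" and S :: "nat \<Rightarrow> 'a set" and st :: "nat \<Rightarrow> 'f set"
  assumes st0: "st 0 = init P"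
    and stS: "\<And>t. st (Suc t) = \<Union> (adds P ` S (Suc t))"
    and acts: "\<And>t. S (Suc t) \<subseteq> acts P"
    and pre: "\<And>t a. a \<in> S (Suc t) \<Longrightarrow> pre P a \<subseteq> st t"
    and nint: "\<And>t a b. a \<in> S (Suc t) \<Longrightarrow> b \<in> S (Suc t) \<Longrightarrow> a \<noteq> b \<Longrightarrow> \<not> interfere P a b"
  shows "st t \<subseteq> fst (fact_layer P t) \<and> (\<forall>p\<in>st t. \<forall>q\<in>st t. (p, q) \<notin> snd (fact_layer P t))"
proof (induction t)
  case 0
  then show ?case using st0 by simp
next
  case (Suc t)
  define F where "F = fst (fact_layer P t)"
  define M where "M = snd (fact_layer P t)"
  have IH1: "st t \<subseteq> F" and IH2: "\<forall>p\<in>st t. \<forall>q\<in>st t. (p, q) \<notin> M" using Suc F_def M_def by auto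
  have inA: "S (Suc t) \<subseteq> act_layer P F M"
  proof
    fix a assume a: "a \<in> S (Suc t)"
    then have "pre P a \<subseteq> st t" using pre by blast
    then show "a \<in> act_layer P F M" unfolding act_layer_def using a acts IH1 IH2 by blast
  qed
  have nm: "\<not> act_mutex P M a b" if "a \<in> S (Suc t)" "b \<in> S (Suc t)" for a b
  proof -
    have "pre P a \<subseteq> st t" "pre P b \<subseteq> st t" using pre that by auto
    then show ?thesis unfolding act_mutex_def using nint[OF that] IH2 by blast
  qed
  have fl: "fact_layer P (Suc t) = (\<Union> (adds P ` act_layer P F M),
      {(p, q). p \<in> \<Union> (adds P ` act_layer P F M) \<and> q \<in> \<Union> (adds P ` act_layer P F M) \<and>
        (\<forall>a\<in>act_layer P F M. \<forall>b\<in>act_layer P F M. p \<in> adds P a \<longrightarrow> q \<in> adds P b \<longrightarrow> act_mutex P M a b)})"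
    by (simp add: F_def M_def Let_def)
  show ?case unfolding fl stS using inA nm by fastforce
qed

lemma run_sound_act:
  fixes P :: "('f,'a) strips" and S :: "nat \<Rightarrow> 'a set" and st :: "nat \<Rightarrow> 'f set"
  assumes st0: "st 0 = init P"
    and stS: "\<And>t. st (Suc t) = \<Union> (adds P ` S (Suc t))"
    and acts: "\<And>t. S (Suc t) \<subseteq> acts P"
    and pre: "\<And>t a. a \<in> S (Suc t) \<Longrightarrow> pre P a \<subseteq> st t"
    and nint: "\<And>t a b. a \<in> S (Suc t) \<Longrightarrow> b \<in> S (Suc t) \<Longrightarrow> a \<noteq> b \<Longrightarrow> \<not> interfere P a b"
    and t: "1 \<le> t" and a: "a \<in> S t" and b: "b \<in> S t"
  shows "a \<in> actions_at P t \<and> \<not> mutex_at P t a b"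
proof -
  obtain u where u: "t = Suc u" using t by (cases t) auto
  have R: "st u \<subseteq> fst (fact_layer P u) \<and> (\<forall>p\<in>st u. \<forall>q\<in>st u. (p, q) \<notin> snd (fact_layer P u))"
    by (rule run_sound[OF st0 stS acts pre nint])
  have pa: "pre P a \<subseteq> st u" "pre P b \<subseteq> st u" using pre a b u by auto
  have "a \<in> actions_at P t" unfolding actions_at_def act_layer_def using u pa R a acts by (auto, blast)
  moreover have "\<not> mutex_at P t a b" unfolding mutex_at_def act_mutex_def using u pa R a b nint by fastforce
  ultimately show ?thesis by blast
qed

fun in_sched :: "(nat \<Rightarrow> nat) \<Rightarrow> action \<Rightarrow> nat \<Rightarrow> bool" where
  "in_sched \<sigma> (Move x y) t = (\<sigma> ((t+1) div 2) \<noteq> 0 \<and>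
      ((odd t \<and> x = L0 \<and> y = L (\<sigma> ((t+1) div 2)) 1) \<or> (even t \<and> x = L (\<sigma> ((t+1) div 2)) 1 \<and> y = L0)))"
| "in_sched \<sigma> (Noop (At x)) t = (x = L0 \<and> \<sigma> ((t+1) div 2) = 0)"
| "in_sched \<sigma> (Noop (Visited x)) t = (\<exists>h. 1 \<le> h \<and> 2*h \<le> t \<and> \<sigma> h \<noteq> 0 \<and> x = L (\<sigma> h) 1)"

definition sst :: "(nat \<Rightarrow> nat) \<Rightarrow> nat \<Rightarrow> fact set" where
  "sst \<sigma> t = (if t = 0 then {At L0} else \<Union> (map_add ` {a. in_sched \<sigma> a t}))"

lemma leaf_node: "2 \<le> n \<Longrightarrow> 1 \<le> k \<Longrightarrow> k \<le> n \<Longrightarrow> L k 1 \<in> map_nodes n"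
  unfolding map_nodes_def by (cases "k = 1") auto

lemma sched_acts:
  assumes "\<forall>h. \<sigma> h \<le> n" "2 \<le> n" "in_sched \<sigma> a t"
  shows "a \<in> acts (map_task1 n)"
proof (cases a)
  case (Move x y)
  let ?k = "\<sigma> ((t+1) div 2)"
  have k: "1 \<le> ?k" "?k \<le> n" using assms Move by auto
  have "map_edge n x y" using assms Move k unfolding map_edge_def map_adj0_def by auto
  then show ?thesis using Move by (simp add: map_task1_def)
next
  case (Noop p)
  show ?thesis
  proof (cases p)
    case (At x)
    then show ?thesis using Noop assms by (auto simp: map_task1_def map_facts_def map_nodes_def)
  next
    case (Visited x)
    then obtain h where h: "\<sigma> h \<noteq> 0" "x = L (\<sigma> h) 1" using Noop assms by auto
    have "x \<in> map_nodes n" using leaf_node[of n "\<sigma> h"] h assms by auto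
    then show ?thesis using Noop Visited by (auto simp: map_task1_def map_facts_def)
  qed
qed

lemma sst_I: "in_sched \<sigma> a t \<Longrightarrow> p \<in> map_add a \<Longrightarrow> t \<noteq> 0 \<Longrightarrow> p \<in> sst \<sigma> t"
  unfolding sst_def by auto

lemma sched_pre:
  assumes "in_sched \<sigma> a (Suc t)"
  shows "map_pre a \<subseteq> sst \<sigma> t"
proof (cases a)
  case (Move x y)
  show ?thesis
  proof (cases "odd (Suc t)")
    case True
    then have xy: "x = L0" using assms Move by auto
    show ?thesis
    proof (cases "t = 0")
      case True then show ?thesis using xy Move by (simp add: sst_def)
    next
      case False
      have ev: "even t" using \<open>odd (Suc t)\<close> by simp
      show ?thesis
      proof (cases "\<sigma> ((t+1) div 2) = 0")
        case True
        then have "in_sched \<sigma> (Noop (At L0)) t" by simp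
        note sI = sst_I[OF this] show ?thesis using xy Move False sI by auto
      next
        case False
        then have "in_sched \<sigma> (Move (L (\<sigma> ((t+1) div 2)) 1) L0) t" using ev by simp
        note sI = sst_I[OF this] show ?thesis using xy Move \<open>t \<noteq> 0\<close> sI by auto
      qed
    qed
  next
    case False
    then have ev: "even (Suc t)" by simp
    then have t0: "t \<noteq> 0" by (cases t) auto
    have sl: "(Suc t + 1) div 2 = (t+1) div 2" using ev by presburger
    have x: "x = L (\<sigma> ((t+1) div 2)) 1" and nz: "\<sigma> ((t+1) div 2) \<noteq> 0"
      using assms Move ev sl by auto
    have "odd t" using ev by simp
    then have "in_sched \<sigma> (Move L0 (L (\<sigma> ((t+1) div 2)) 1)) t" using nz by simp
    note sI = sst_I[OF this] show ?thesis using x Move t0 sI by auto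
  qed
next
  case (Noop p)
  show ?thesis
  proof (cases p)
    case (At x)
    then have x: "x = L0" and z: "\<sigma> ((Suc t + 1) div 2) = 0" using assms Noop by auto
    show ?thesis
    proof (cases "t = 0")
      case True then show ?thesis using x Noop At by (simp add: sst_def)
    next
      case t0: False
      show ?thesis
      proof (cases "odd t")
        case True
        then have "(Suc t + 1) div 2 = (t+1) div 2" by presburger
        then have "in_sched \<sigma> (Noop (At L0)) t" using z by simp
        note sI = sst_I[OF this] show ?thesis using x Noop At t0 sI by auto
      next
        case False
        show ?thesis
        proof (cases "\<sigma> ((t+1) div 2) = 0")
          case True
          then have "in_sched \<sigma> (Noop (At L0)) t" by simp
          note sI = sst_I[OF this] show ?thesis using x Noop At t0 sI by auto
        next
          case nz: False
          then have "in_sched \<sigma> (Move (L (\<sigma> ((t+1) div 2)) 1) L0) t" using False by simp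
          note sI = sst_I[OF this] show ?thesis using x Noop At t0 sI by auto
        qed
      qed
    qed
  next
    case (Visited x)
    then obtain h where h: "1 \<le> h" "2*h \<le> Suc t" "\<sigma> h \<noteq> 0" "x = L (\<sigma> h) 1" using assms Noop by auto
    show ?thesis
    proof (cases "2*h \<le> t")
      case True
      then have "in_sched \<sigma> (Noop (Visited x)) t" using h by auto
      note sI = sst_I[OF this] show ?thesis using Noop Visited h True sI by auto
    next
      case False
      then have tt: "t = 2*h - 1" using h by linarith
      then have "odd t" "(t+1) div 2 = h" using h by auto
      then have "in_sched \<sigma> (Move L0 x) t" using h by simp
      note sI = sst_I[OF this] show ?thesis using Noop Visited h tt sI by auto
    qed
  qed
qed

lemma sched_nint:
  assumes "in_sched \<sigma> a t" "in_sched \<sigma> b t" "a \<noteq> b"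
  shows "\<not> interfere (map_task1 n) a b"
  using assms unfolding interfere_def map_task1_def
  by (cases a rule: map_del.cases; cases b rule: map_del.cases) (auto elim: in_sched.elims)

lemma sched_ok:
  assumes "\<forall>h. \<sigma> h \<le> n" "2 \<le> n" "1 \<le> t" "in_sched \<sigma> a t" "in_sched \<sigma> b t"
  shows "a \<in> actions_at (map_task1 n) t \<and> \<not> mutex_at (map_task1 n) t a b"
proof (rule run_sound_act[where S = "\<lambda>t. {a. in_sched \<sigma> a t}" and st = "sst \<sigma>"])
  show "sst \<sigma> 0 = init (map_task1 n)" by (simp add: sst_def map_task1_def)
  show "\<And>t. sst \<sigma> (Suc t) = \<Union> (adds (map_task1 n) ` {a. in_sched \<sigma> a (Suc t)})"
    by (simp add: sst_def map_task1_def)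
  show "\<And>t. {a. in_sched \<sigma> a (Suc t)} \<subseteq> acts (map_task1 n)" using sched_acts assms by blast
  show "\<And>t a. a \<in> {a. in_sched \<sigma> a (Suc t)} \<Longrightarrow> pre (map_task1 n) a \<subseteq> sst \<sigma> t"
    using sched_pre by (simp add: map_task1_def)
  show "\<And>t a b. a \<in> {a. in_sched \<sigma> a (Suc t)} \<Longrightarrow> b \<in> {a. in_sched \<sigma> a (Suc t)} \<Longrightarrow> a \<noteq> b \<Longrightarrow>
     \<not> interfere (map_task1 n) a b" using sched_nint by blast
qed (use assms in auto)

type_synonym cass = "(nat \<Rightarrow> nat) \<times> nat \<times> nat"

definition crit :: "nat \<Rightarrow> cass \<Rightarrow> bool" where
  "crit n \<alpha> = (case \<alpha> of (\<sigma>, i, f) \<Rightarrow> i \<in> {1..n} \<and> 2 \<le> f \<and> f \<le> n - 1 \<and>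
      bij_betw \<sigma> {1..n-1} ({1..n} - {i}) \<and> (\<forall>h. h \<notin> {1..n-1} \<longrightarrow> \<sigma> h = 0))"

fun val :: "cass \<Rightarrow> action \<times> nat \<Rightarrow> bool" where
  "val (\<sigma>, i, f) (a, t) = (in_sched \<sigma> a t \<or> (a = Noop (Visited (L i 1)) \<and> 2*f \<le> t))"

fun ltrue :: "cass \<Rightarrow> (action \<times> nat) lit \<Rightarrow> bool" where
  "ltrue \<alpha> (Pos v) = val \<alpha> v"
| "ltrue \<alpha> (Neg v) = (\<not> val \<alpha> v)"

definition csat :: "cass \<Rightarrow> (action \<times> nat) clause \<Rightarrow> bool" where
  "csat \<alpha> C = (\<exists>l\<in>C. ltrue \<alpha> l)"

lemma crit_in: "crit n (\<sigma>, i, f) \<Longrightarrow> h \<in> {1..n-1} \<Longrightarrow> \<sigma> h \<in> {1..n} - {i}"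
proof -
  assume c: "crit n (\<sigma>, i, f)" and h: "h \<in> {1..n-1}"
  have "\<sigma> h \<in> \<sigma> ` {1..n-1}" using h by blast
  then show ?thesis using c unfolding crit_def bij_betw_def by simp
qed

lemma crit_le: "crit n (\<sigma>, i, f) \<Longrightarrow> \<sigma> h \<le> n"
proof -
  assume c: "crit n (\<sigma>, i, f)"
  show ?thesis
  proof (cases "h \<in> {1..n-1}")
    case True then show ?thesis using crit_in[OF c True] by simp
  next
    case False then show ?thesis using c unfolding crit_def by simp
  qed
qed

lemma crit_ex: "crit n (\<sigma>, i, f) \<Longrightarrow> k \<in> {1..n} \<Longrightarrow> k \<noteq> i \<Longrightarrow> \<exists>h\<in>{1..n-1}. \<sigma> h = k"
proof -
  assume c: "crit n (\<sigma>, i, f)" and k: "k \<in> {1..n}" "k \<noteq> i"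
  then have "k \<in> \<sigma> ` {1..n-1}" unfolding crit_def bij_betw_def by simp
  then show ?thesis by blast
qed

lemma pair_fake:
  assumes c: "crit n (\<sigma>, i, f)" and t: "2*f \<le> t" and b: "val (\<sigma>, i, f) (b, t)"
  shows "\<exists>\<sigma>'. (\<forall>h. \<sigma>' h \<le> n) \<and> in_sched \<sigma>' (Noop (Visited (L i 1))) t \<and> in_sched \<sigma>' b t"
proof -
  have f2: "2 \<le> f" and i: "1 \<le> i" "i \<le> n" using c unfolding crit_def by auto
  have le: "\<sigma> h \<le> n" for h using crit_le[OF c] .
  show ?thesis
  proof (cases "b = Noop (Visited (L i 1))")
    case True
    have "in_sched (\<sigma>(1 := i)) (Noop (Visited (L i 1))) t" using t f2 i by (intro in_sched.simps(3)[THEN iffD2]) (rule exI[of _ 1], auto)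
    moreover have "\<forall>h. (\<sigma>(1 := i)) h \<le> n" using le i by simp
      ultimately show ?thesis using True by blast
  next
    case False
    then have bs: "in_sched \<sigma> b t" using b by simp
    show ?thesis
    proof (cases "in_sched (\<sigma>(1 := i)) b t")
      case True
      have "in_sched (\<sigma>(1 := i)) (Noop (Visited (L i 1))) t" using t f2 i by (intro in_sched.simps(3)[THEN iffD2]) (rule exI[of _ 1], auto)
      moreover have "\<forall>h. (\<sigma>(1 := i)) h \<le> n" using le i by simp
      ultimately show ?thesis using True by blast
    next
      case nb: False
      have t4: "4 \<le> t" using t f2 by linarith
      have sl: "(t+1) div 2 \<noteq> 1" using t4 by presburger
      have b2: "in_sched (\<sigma>(2 := i)) b t"
      proof (cases b)
        case (Move x y)
        then show ?thesis using bs nb sl by auto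
      next
        case (Noop p)
        show ?thesis
        proof (cases p)
          case (At x)
          then show ?thesis using bs nb sl Noop by auto
        next
          case (Visited x)
          obtain h where h: "1 \<le> h" "2*h \<le> t" "\<sigma> h \<noteq> 0" "x = L (\<sigma> h) 1" using bs Noop Visited by auto
          have "h = 1"
          proof (rule ccontr)
            assume "h \<noteq> 1"
            then have "in_sched (\<sigma>(1 := i)) b t" using h Noop Visited by auto
            then show False using nb by simp
          qed
          then show ?thesis using h Noop Visited by (auto intro!: exI[of _ 1])
        qed
      qed
      have "in_sched (\<sigma>(2 := i)) (Noop (Visited (L i 1))) t" using t4 i by (intro in_sched.simps(3)[THEN iffD2]) (rule exI[of _ 2], auto)
      moreover have "\<forall>h. (\<sigma>(2 := i)) h \<le> n" using le i by simp
      ultimately show ?thesis using b2 by blast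
    qed
  qed
qed

lemma pair_sched:
  assumes c: "crit n (\<sigma>, i, f)" and a: "val (\<sigma>, i, f) (a, t)" and b: "val (\<sigma>, i, f) (b, t)"
  shows "\<exists>\<sigma>'. (\<forall>h. \<sigma>' h \<le> n) \<and> in_sched \<sigma>' a t \<and> in_sched \<sigma>' b t"
proof (cases "in_sched \<sigma> a t")
  case True
  show ?thesis
  proof (cases "in_sched \<sigma> b t")
    case True
    then show ?thesis using \<open>in_sched \<sigma> a t\<close> crit_le[OF c] by blast
  next
    case False
    then have "b = Noop (Visited (L i 1))" "2*f \<le> t" using b by auto
    then show ?thesis using pair_fake[OF c _ a] by blast
  qed
next
  case False
  then have "a = Noop (Visited (L i 1))" "2*f \<le> t" using a by auto
  then show ?thesis using pair_fake[OF c _ b] by blast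
qed

lemma L_both:
  assumes c: "crit n (\<sigma>, i, f)" and n: "2 \<le> n" and t: "1 \<le> t"
    and a: "val (\<sigma>, i, f) (a, t)" and b: "val (\<sigma>, i, f) (b, t)"
  shows "a \<in> actions_at (map_task1 n) t \<and> \<not> mutex_at (map_task1 n) t a b"
proof -
  obtain \<sigma>' where "\<forall>h. \<sigma>' h \<le> n" "in_sched \<sigma>' a t" "in_sched \<sigma>' b t"
    using pair_sched[OF c a b] by blast
  then show ?thesis using sched_ok n t by blast
qed

lemma task_simps: "adds (map_task1 n) = map_add" "pre (map_task1 n) = map_pre"
  "goal (map_task1 n) = {Visited (L i 1) | i. 1 \<le> i \<and> i \<le> n}"
  by (simp_all add: map_task1_def)

lemma goal_sat:
  assumes n: "3 \<le> n" and c: "crit n (\<sigma>, i, f)" and g: "1 \<le> g" "g \<le> n"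
  shows "csat (\<sigma>, i, f) {Pos (a, 2*n-2) | a. a \<in> actions_at (map_task1 n) (2*n-2) \<and> Visited (L g 1) \<in> adds (map_task1 n) a}"
proof -
  let ?a = "Noop (Visited (L g 1))"
  have v: "val (\<sigma>, i, f) (?a, 2*n-2)"
  proof (cases "g = i")
    case True
    then show ?thesis using c unfolding crit_def by auto
  next
    case False
    have "\<exists>h\<in>{1..n-1}. \<sigma> h = g" using crit_ex[OF c, of g] g False by simp
    then obtain h where h: "h \<in> {1..n-1}" "\<sigma> h = g" by blast
    then have "in_sched \<sigma> ?a (2*n-2)" using g by (intro in_sched.simps(3)[THEN iffD2]) (rule exI[of _ h], auto)
    then show ?thesis by simp
  qed
  have act: "?a \<in> actions_at (map_task1 n) (2*n-2)" using L_both[OF c _ _ v v] n by auto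
  show ?thesis unfolding csat_def
  proof (rule bexI[of _ "Pos (?a, 2*n-2)"])
    show "ltrue (\<sigma>, i, f) (Pos (?a, 2*n-2))" using v by simp
    show "Pos (?a, 2*n-2) \<in> {Pos (a, 2*n-2) | a. a \<in> actions_at (map_task1 n) (2*n-2) \<and> Visited (L g 1) \<in> adds (map_task1 n) a}"
      using act by (auto simp: task_simps)
  qed
qed

lemma mutex_sat:
  assumes n: "3 \<le> n" and c: "crit n (\<sigma>, i, f)" and t: "1 \<le> t" and m: "mutex_at (map_task1 n) t a b"
  shows "csat (\<sigma>, i, f) {Neg (a, t), Neg (b, t)}"
  using L_both[OF c _ t, of a b] m n unfolding csat_def by auto

lemma pre_sat:
  assumes n: "3 \<le> n" and c: "crit n (\<sigma>, i, f)" and t: "2 \<le> t"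
    and p: "p \<in> pre (map_task1 n) a" and nf: "a \<noteq> Noop (Visited (L i 1))"
  shows "csat (\<sigma>, i, f) (insert (Neg (a, t)) {Pos (a', t - 1) | a'. a' \<in> actions_at (map_task1 n) (t - 1) \<and> p \<in> adds (map_task1 n) a'})"
proof (cases "val (\<sigma>, i, f) (a, t)")
  case False
  then show ?thesis unfolding csat_def by auto
next
  case True
  then have s: "in_sched \<sigma> a t" using nf by auto
  obtain u where u: "t = Suc u" "u \<noteq> 0" using t by (cases t) auto
  have "map_pre a \<subseteq> sst \<sigma> u" using sched_pre[of \<sigma> a u] s u by simp
  then have "p \<in> sst \<sigma> u" using p by (auto simp: task_simps)
  then obtain a' where a': "in_sched \<sigma> a' u" "p \<in> map_add a'" using u unfolding sst_def by auto
  then have v: "val (\<sigma>, i, f) (a', u)" by simp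
  have "a' \<in> actions_at (map_task1 n) u" using L_both[OF c _ _ v v] n u by auto
  then show ?thesis unfolding csat_def using v a' u by (auto simp: task_simps intro!: bexI[of _ "Pos (a', u)"])
qed

lemma axiom_prop:
  assumes n: "3 \<le> n" and D: "D \<in> MAP1_cnf n"
  shows "\<exists>i0. \<forall>\<sigma> i f. crit n (\<sigma>, i, f) \<and> \<not> csat (\<sigma>, i, f) D \<longrightarrow> i = i0"
proof -
  let ?P = "map_task1 n" and ?T = "2*n-2"
  have "D \<in> {{Pos (a, ?T) | a. a \<in> actions_at ?P ?T \<and> g \<in> adds ?P a} | g. g \<in> goal ?P}
   \<or> D \<in> {insert (Neg (a, t)) {Pos (a', t - 1) | a'. a' \<in> actions_at ?P (t - 1) \<and> p \<in> adds ?P a'}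
       | a t p. 2 \<le> t \<and> t \<le> ?T \<and> a \<in> actions_at ?P t \<and> p \<in> pre ?P a}
   \<or> D \<in> {{Neg (a, t), Neg (b, t)} | a b t. 1 \<le> t \<and> t \<le> ?T \<and> a \<in> actions_at ?P t \<and>
        b \<in> actions_at ?P t \<and> mutex_at ?P t a b}"
    using D unfolding MAP1_cnf_def graphplan_cnf_def by blast
  then show ?thesis
  proof (elim disjE)
    assume "D \<in> {{Pos (a, ?T) | a. a \<in> actions_at ?P ?T \<and> g \<in> adds ?P a} | g. g \<in> goal ?P}"
    then obtain g where "D = {Pos (a, ?T) | a. a \<in> actions_at ?P ?T \<and> Visited (L g 1) \<in> adds ?P a}" "1 \<le> g" "g \<le> n"
      by (auto simp: task_simps)
    then show ?thesis using goal_sat[OF n] by blast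
  next
    assume "D \<in> {insert (Neg (a, t)) {Pos (a', t - 1) | a'. a' \<in> actions_at ?P (t - 1) \<and> p \<in> adds ?P a'}
       | a t p. 2 \<le> t \<and> t \<le> ?T \<and> a \<in> actions_at ?P t \<and> p \<in> pre ?P a}"
    then obtain a t p where D: "D = insert (Neg (a, t)) {Pos (a', t - 1) | a'. a' \<in> actions_at ?P (t - 1) \<and> p \<in> adds ?P a'}"
      and tp: "2 \<le> t" "p \<in> pre ?P a" by blast
    show ?thesis
    proof (rule exI[of _ "SOME k. a = Noop (Visited (L k 1))"], intro allI impI)
      fix \<sigma> i f assume cs: "crit n (\<sigma>, i, f) \<and> \<not> csat (\<sigma>, i, f) D"
      have "a = Noop (Visited (L i 1))"
        using pre_sat[OF n _ tp(1) tp(2)] cs D by blast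
      then show "i = (SOME k. a = Noop (Visited (L k 1)))" by simp
    qed
  next
    assume "D \<in> {{Neg (a, t), Neg (b, t)} | a b t. 1 \<le> t \<and> t \<le> ?T \<and> a \<in> actions_at ?P t \<and>
        b \<in> actions_at ?P t \<and> mutex_at ?P t a b}"
    then show ?thesis using mutex_sat[OF n] by blast
  qed
qed

lemma crit_facts:
  assumes c: "crit n (\<sigma>, i, f)"
  shows "i \<in> {1..n}" "2 \<le> f" "f \<le> n - 1" "inj_on \<sigma> {1..n-1}" "\<sigma> ` {1..n-1} = {1..n} - {i}"
    "\<And>h. h \<notin> {1..n-1} \<Longrightarrow> \<sigma> h = 0"
  using c unfolding crit_def bij_betw_def by auto

lemma crit_not_i: "crit n (\<sigma>, i, f) \<Longrightarrow> \<sigma> k \<noteq> i"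
proof -
  assume c: "crit n (\<sigma>, i, f)"
  show ?thesis
  proof (cases "k \<in> {1..n-1}")
    case True then show ?thesis using crit_in[OF c True] by simp
  next
    case False then show ?thesis using crit_facts[OF c] by auto
  qed
qed

lemma crit_inj: "crit n (\<sigma>, i, f) \<Longrightarrow> \<sigma> k = \<sigma> k' \<Longrightarrow> \<sigma> k \<noteq> 0 \<Longrightarrow> k = k'"
proof -
  assume c: "crit n (\<sigma>, i, f)" and e: "\<sigma> k = \<sigma> k'" and z: "\<sigma> k \<noteq> 0"
  have "k \<in> {1..n-1}" "k' \<in> {1..n-1}" using crit_facts(6)[OF c] z e by metis+
  then show ?thesis using crit_facts(4)[OF c] e by (meson inj_onD)
qed

lemma crit_swap:
  assumes c: "crit n (\<sigma>, i, f)" and h: "h \<in> {1..n-1}" "2 \<le> h" and j: "\<sigma> h = j"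
  shows "crit n (\<sigma>(h := i), j, h)"
proof -
  note cf = crit_facts[OF c]
  have jv: "j \<in> {1..n} - {i}" using crit_in[OF c h(1)] j by simp
  have b1: "bij_betw \<sigma> ({1..n-1} - {h}) ({1..n} - {i} - {j})"
  proof -
    have "\<sigma> ` ({1..n-1} - {h}) = \<sigma> ` {1..n-1} - \<sigma> ` {h}"
      using cf(4) h by (intro inj_on_image_set_diff) auto
    then show ?thesis using cf(4,5) j unfolding bij_betw_def by (auto intro: inj_on_subset)
  qed
  have b1': "bij_betw (\<sigma>(h := i)) ({1..n-1} - {h}) ({1..n} - {i} - {j})"
    using b1 by (subst bij_betw_cong[where g = \<sigma>]) auto
  have b2: "bij_betw (\<sigma>(h := i)) {h} {i}" by (simp add: bij_betw_def)
  have "bij_betw (\<sigma>(h := i)) (({1..n-1} - {h}) \<union> {h}) (({1..n} - {i} - {j}) \<union> {i})"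
    by (rule bij_betw_combine[OF b1' b2]) auto
  moreover have "({1..n-1} - {h}) \<union> {h} = {1..n-1}" using h by auto
  moreover have "({1..n} - {i} - {j}) \<union> {i} = {1..n} - {j}" using jv cf(1) by auto
  ultimately have "bij_betw (\<sigma>(h := i)) {1..n-1} ({1..n} - {j})" by simp
  then show ?thesis unfolding crit_def using jv h cf(6) by auto
qed

lemma val_vis: "val (\<sigma>, i, f) (Noop (Visited x), t) = ((\<exists>k. 1 \<le> k \<and> 2*k \<le> t \<and> \<sigma> k \<noteq> 0 \<and> x = L (\<sigma> k) 1) \<or> (x = L i 1 \<and> 2*f \<le> t))"
  by simp

lemma ex_unique_simp: "(\<forall>k. g k = i \<longleftrightarrow> k = h) \<Longrightarrow>
  (\<exists>k. 1 \<le> k \<and> 2*k \<le> t \<and> g k \<noteq> 0 \<and> L i 1 = L (g k) 1) = (1 \<le> h \<and> 2*h \<le> t \<and> i \<noteq> 0)"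
proof -
  assume u: "\<forall>k. g k = i \<longleftrightarrow> k = h"
  have gh: "g h = i" using u by blast
  show ?thesis
  proof
    assume "\<exists>k. 1 \<le> k \<and> 2*k \<le> t \<and> g k \<noteq> 0 \<and> L i 1 = L (g k) 1"
    then obtain k where k: "1 \<le> k" "2*k \<le> t" "g k \<noteq> 0" "L i 1 = L (g k) 1" by blast
    then have "g k = i" by (metis node.inject)
    then have "k = h" using u by blast
    then show "1 \<le> h \<and> 2*h \<le> t \<and> i \<noteq> 0" using k \<open>g k = i\<close> by simp
  next
    assume "1 \<le> h \<and> 2*h \<le> t \<and> i \<noteq> 0"
    then show "\<exists>k. 1 \<le> k \<and> 2*k \<le> t \<and> g k \<noteq> 0 \<and> L i 1 = L (g k) 1"
      using gh by (intro exI[of _ h]) simp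
  qed
qed

lemma val_swap:
  assumes c: "crit n (\<sigma>, i, f)" and h: "h \<in> {1..n-1}" and j: "\<sigma> h = j"
    and cg: "crit n (\<tau>, i', f')" and th: "\<tau> h = i"
    and d: "val (\<sigma>, i, f) v \<noteq> val (\<sigma>(h := i), j, h) v"
  shows "val (\<tau>, i', f') v = val (\<sigma>(h := i), j, h) v"
proof -
  obtain a t where v: "v = (a, t)" by (cases v)
  have ni: "\<And>k. \<sigma> k \<noteq> i" using crit_not_i[OF c] by blast
  have jz: "j \<noteq> 0" using crit_in[OF c h] j by simp
  have iz: "i \<noteq> 0" using crit_facts(1)[OF c] by simp
  have sj: "\<And>k. \<sigma> k = j \<Longrightarrow> k = h" using crit_inj[OF c] j jz by metis
  have ti: "\<And>k. \<tau> k = i \<Longrightarrow> k = h" using crit_inj[OF cg] th iz by metis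
  have ii: "i' \<noteq> i" using crit_not_i[OF cg, of h] th by simp
  show ?thesis
  proof (cases a)
    case (Move x y)
    then show ?thesis using d v th by (cases "(t+1) div 2 = h") auto
  next
    case (Noop p)
    show ?thesis
    proof (cases p)
      case (At x)
      then show ?thesis using d v th Noop by (cases "(t+1) div 2 = h") auto
    next
      case (Visited x)
      show ?thesis
      proof (cases "x = L i 1")
        case True
        have u1: "\<forall>k. (\<sigma>(h := i)) k = i \<longleftrightarrow> k = h" using ni by auto
        have u2: "\<forall>k. \<tau> k = i \<longleftrightarrow> k = h" using ti th by blast
        have ji: "j \<noteq> i" using ni j by blast
        have e1: "val (\<sigma>(h := i), j, h) v = (1 \<le> h \<and> 2*h \<le> t \<and> i \<noteq> 0)"
        proof -
          have "(L i 1 = L j 1) = False" using ji by simp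
          then show ?thesis by (simp only: v Noop Visited True val_vis ex_unique_simp[OF u1] simp_thms)
        qed
        have e2: "val (\<tau>, i', f') v = (1 \<le> h \<and> 2*h \<le> t \<and> i \<noteq> 0)"
        proof -
          have "(L i 1 = L i' 1) = False" using ii by simp
          then show ?thesis by (simp only: v Noop Visited True val_vis ex_unique_simp[OF u2] simp_thms)
        qed
        show ?thesis using e1 e2 by simp
      next
        case False
        have "val (\<sigma>, i, f) v = val (\<sigma>(h := i), j, h) v"
        proof -
          have A: "(\<exists>k. 1 \<le> k \<and> 2*k \<le> t \<and> \<sigma> k \<noteq> 0 \<and> x = L (\<sigma> k) (Suc 0)) =
                ((\<exists>k. 1 \<le> k \<and> 2*k \<le> t \<and> (\<sigma>(h := i)) k \<noteq> 0 \<and> x = L ((\<sigma>(h := i)) k) (Suc 0)) \<or> (x = L j (Suc 0) \<and> 2*h \<le> t))"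
          proof
            assume "\<exists>k. 1 \<le> k \<and> 2*k \<le> t \<and> \<sigma> k \<noteq> 0 \<and> x = L (\<sigma> k) (Suc 0)"
            then obtain k where k: "1 \<le> k" "2*k \<le> t" "\<sigma> k \<noteq> 0" "x = L (\<sigma> k) (Suc 0)" by blast
            show "(\<exists>k. 1 \<le> k \<and> 2*k \<le> t \<and> (\<sigma>(h := i)) k \<noteq> 0 \<and> x = L ((\<sigma>(h := i)) k) (Suc 0)) \<or> (x = L j (Suc 0) \<and> 2*h \<le> t)"
            proof (cases "k = h")
              case True then show ?thesis using k j by auto
            next
              case False then show ?thesis using k by (intro disjI1 exI[of _ k]) auto
            qed
          next
            assume "(\<exists>k. 1 \<le> k \<and> 2*k \<le> t \<and> (\<sigma>(h := i)) k \<noteq> 0 \<and> x = L ((\<sigma>(h := i)) k) (Suc 0)) \<or> (x = L j (Suc 0) \<and> 2*h \<le> t)"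
            then show "\<exists>k. 1 \<le> k \<and> 2*k \<le> t \<and> \<sigma> k \<noteq> 0 \<and> x = L (\<sigma> k) (Suc 0)"
            proof
              assume "\<exists>k. 1 \<le> k \<and> 2*k \<le> t \<and> (\<sigma>(h := i)) k \<noteq> 0 \<and> x = L ((\<sigma>(h := i)) k) (Suc 0)"
              then obtain k where k: "1 \<le> k" "2*k \<le> t" "(\<sigma>(h := i)) k \<noteq> 0" "x = L ((\<sigma>(h := i)) k) (Suc 0)" by blast
              have "k \<noteq> h" using k(4) False by auto
              then show ?thesis using k by (intro exI[of _ k]) auto
            next
              assume "x = L j (Suc 0) \<and> 2*h \<le> t"
              then show ?thesis using h j jz by (intro exI[of _ h]) auto
            qed
          qed
          show ?thesis unfolding v Noop Visited val.simps in_sched.simps using A False by simp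
        qed
        then show ?thesis using d by simp
      qed
    qed
  qed
qed

lemma swap_lemma:
  assumes c: "crit n (\<sigma>, i, f)" and h: "h \<in> {1..n-1}" and j: "\<sigma> h = j"
    and nf: "\<not> csat (\<sigma>, i, f) C" and s': "csat (\<sigma>(h := i), j, h) C"
    and cg: "crit n (\<tau>, i', f')" and th: "\<tau> h = i"
  shows "csat (\<tau>, i', f') C"
proof -
  obtain l where l: "l \<in> C" "ltrue (\<sigma>(h := i), j, h) l" using s' unfolding csat_def by blast
  have nl: "\<not> ltrue (\<sigma>, i, f) l" using nf l(1) unfolding csat_def by blast
  show ?thesis
  proof (cases l)
    case (Pos v)
    then have "val (\<sigma>, i, f) v \<noteq> val (\<sigma>(h := i), j, h) v" using l nl by simp
    from val_swap[OF c h j cg th this] have "ltrue (\<tau>, i', f') l" using Pos l by simp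
    then show ?thesis using l unfolding csat_def by blast
  next
    case (Neg v)
    then have "val (\<sigma>, i, f) v \<noteq> val (\<sigma>(h := i), j, h) v" using l nl by simp
    from val_swap[OF c h j cg th this] have "ltrue (\<tau>, i', f') l" using Neg l by simp
    then show ?thesis using l unfolding csat_def by blast
  qed
qed

lemma ltrue_negate: "ltrue \<alpha> (negate l) = (\<not> ltrue \<alpha> l)"
  by (cases l) auto

lemma resolvent_sound:
  assumes "resolvent C D E" "\<not> csat \<alpha> E"
  shows "\<not> csat \<alpha> C \<or> \<not> csat \<alpha> D"
proof -
  obtain l where l: "l \<in> C" "negate l \<in> D" "E = (C - {l}) \<union> (D - {negate l})"
    using assms(1) unfolding resolvent_def by blast
  show ?thesis
  proof (rule ccontr)
    assume "\<not> ?thesis"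
    then obtain l1 l2 where l1: "l1 \<in> C" "ltrue \<alpha> l1" and l2: "l2 \<in> D" "ltrue \<alpha> l2"
      unfolding csat_def by blast
    have "l1 = l" using l1 l assms(2) unfolding csat_def by blast
    moreover have "l2 = negate l" using l2 l assms(2) unfolding csat_def by blast
    ultimately show False using l1 l2 ltrue_negate by metis
  qed
qed

definition pwf :: "nat \<Rightarrow> (nat \<Rightarrow> nat) \<Rightarrow> bool" where
  "pwf n p = ((\<forall>h. p h \<noteq> 0 \<longrightarrow> h \<in> {1..n-1} \<and> p h \<le> n) \<and> inj_on p {h. p h \<noteq> 0})"

definition pdom :: "(nat \<Rightarrow> nat) \<Rightarrow> nat set" where
  "pdom p = {h. p h \<noteq> 0}"

definition cons :: "(nat \<Rightarrow> nat) \<Rightarrow> (nat \<Rightarrow> nat) \<Rightarrow> bool" where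
  "cons p \<sigma> = (\<forall>h. p h \<noteq> 0 \<longrightarrow> \<sigma> h = p h)"

lemma pdom_sub: "pwf n p \<Longrightarrow> pdom p \<subseteq> {1..n-1}"
  unfolding pwf_def pdom_def by auto

lemma exists_cons:
  assumes n: "3 \<le> n" and p: "pwf n p" and i: "i \<in> {1..n} - p ` pdom p"
  shows "\<exists>\<sigma> f. crit n (\<sigma>, i, f) \<and> cons p \<sigma>"
proof -
  let ?Sl = "{1..n-1::nat}" and ?D = "pdom p"
  have Dsub: "?D \<subseteq> ?Sl" using pdom_sub[OF p] .
  have injp: "inj_on p ?D" using p unfolding pwf_def pdom_def by simp
  have usub: "p ` ?D \<subseteq> {1..n} - {i}" using p i unfolding pwf_def pdom_def by auto
  have cu: "card (p ` ?D) = card ?D" using card_image[OF injp] .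
  let ?A = "?Sl - ?D" and ?B = "{1..n} - {i} - p ` ?D"
  have fD: "finite ?D" using Dsub finite_subset by blast
  have cA: "card ?A = (n - 1) - card ?D" using Dsub fD by (simp add: card_Diff_subset)
  have ci: "card ({1..n} - {i}) = n - 1" using i by simp
  have cB: "card ?B = (n - 1) - card ?D" using usub cu ci
    by (simp add: card_Diff_subset finite_subset[OF usub])
  obtain g where g: "bij_betw g ?A ?B" using finite_same_card_bij[of ?A ?B] cA cB by auto
  define \<sigma> where "\<sigma> = (\<lambda>k. if p k \<noteq> 0 then p k else if k \<in> ?Sl then g k else 0)"
  have b0: "bij_betw p ?D (p ` ?D)" using injp by (simp add: bij_betw_def)
  have "bij_betw \<sigma> ?D (p ` ?D) = bij_betw p ?D (p ` ?D)"
    by (rule bij_betw_cong) (simp add: \<sigma>_def pdom_def)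
  then have b1: "bij_betw \<sigma> ?D (p ` ?D)" using b0 by simp
  have "bij_betw \<sigma> ?A ?B = bij_betw g ?A ?B"
    by (rule bij_betw_cong) (simp add: \<sigma>_def pdom_def)
  then have b2: "bij_betw \<sigma> ?A ?B" using g by simp
  have "bij_betw \<sigma> (?D \<union> ?A) (p ` ?D \<union> ?B)" by (rule bij_betw_combine[OF b1 b2]) auto
  moreover have "?D \<union> ?A = ?Sl" using Dsub by auto
  moreover have "p ` ?D \<union> ?B = {1..n} - {i}" using usub by auto
  ultimately have b: "bij_betw \<sigma> ?Sl ({1..n} - {i})" by simp
  have z: "\<forall>h. h \<notin> ?Sl \<longrightarrow> \<sigma> h = 0" using Dsub unfolding \<sigma>_def pdom_def by auto
  have "crit n (\<sigma>, i, 2)" unfolding crit_def using b z i n by auto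
  moreover have "cons p \<sigma>" unfolding cons_def \<sigma>_def by simp
  ultimately show ?thesis by blast
qed

definition Rem :: "nat \<Rightarrow> (nat \<Rightarrow> nat) \<Rightarrow> nat set" where
  "Rem n p = {1..n} - p ` pdom p"

definition good :: "nat \<Rightarrow> (nat \<Rightarrow> nat) \<Rightarrow> (action \<times> nat) clause \<Rightarrow> nat set \<Rightarrow> bool" where
  "good n p C I = (I \<subseteq> Rem n p \<and> (\<forall>\<sigma> i f. crit n (\<sigma>, i, f) \<and> cons p \<sigma> \<and> \<not> csat (\<sigma>, i, f) C \<longrightarrow> i \<in> I))"

definition mu :: "nat \<Rightarrow> (nat \<Rightarrow> nat) \<Rightarrow> (action \<times> nat) clause \<Rightarrow> nat" where
  "mu n p C = (LEAST k. \<exists>I. good n p C I \<and> card I = k)"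

definition Mset :: "nat \<Rightarrow> (action \<times> nat) clause \<Rightarrow> (nat \<times> nat) set" where
  "Mset n C = {(j, h). j \<in> {1..n} \<and> h \<in> {1..n-1} \<and> (\<forall>\<tau> i' f'. crit n (\<tau>, i', f') \<and> \<tau> h = j \<longrightarrow> csat (\<tau>, i', f') C)}"

definition hit :: "nat \<Rightarrow> (nat \<Rightarrow> nat) \<Rightarrow> (action \<times> nat) clause \<Rightarrow> bool" where
  "hit n p C = (\<exists>h. p h \<noteq> 0 \<and> (p h, h) \<in> Mset n C)"

lemma finite_Rem: "finite (Rem n p)" unfolding Rem_def by simp

lemma cons_miss:
  assumes c: "crit n (\<sigma>, i, f)" and cs: "cons p \<sigma>"
  shows "i \<in> Rem n p"
proof -
  have "i \<notin> p ` pdom p"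
  proof
    assume "i \<in> p ` pdom p"
    then obtain h where "p h \<noteq> 0" "p h = i" unfolding pdom_def by auto
    then have "\<sigma> h = i" using cs unfolding cons_def by auto
    then show False using crit_not_i[OF c] by blast
  qed
  then show ?thesis using crit_facts(1)[OF c] unfolding Rem_def by blast
qed

lemma good_Rem: "good n p C (Rem n p)"
  unfolding good_def using cons_miss by blast

lemma mu_good: "\<exists>I. good n p C I \<and> card I = mu n p C"
  unfolding mu_def by (rule LeastI_ex) (use good_Rem in blast)

lemma mu_le: "good n p C I \<Longrightarrow> mu n p C \<le> card I"
  unfolding mu_def by (rule Least_le) blast

lemma mu_axiom:
  assumes n: "3 \<le> n" and D: "D \<in> MAP1_cnf n"
  shows "mu n p D \<le> 1"
proof -
  obtain i0 where i0: "\<forall>\<sigma> i f. crit n (\<sigma>, i, f) \<and> \<not> csat (\<sigma>, i, f) D \<longrightarrow> i = i0"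
    using axiom_prop[OF n D] by blast
  have "good n p D ({i0} \<inter> Rem n p)"
    unfolding good_def using i0 cons_miss by blast
  then have "mu n p D \<le> card ({i0} \<inter> Rem n p)" by (rule mu_le)
  also have "\<dots> \<le> 1" by (simp add: card_le_Suc0_iff_eq)
  finally show ?thesis .
qed

lemma mu_res:
  assumes r: "resolvent C D E"
  shows "mu n p E \<le> mu n p C + mu n p D"
proof -
  obtain I1 where I1: "good n p C I1" "card I1 = mu n p C" using mu_good by blast
  obtain I2 where I2: "good n p D I2" "card I2 = mu n p D" using mu_good by blast
  have "good n p E (I1 \<union> I2)"
    using I1(1) I2(1) resolvent_sound[OF r] unfolding good_def by blast
  then have "mu n p E \<le> card (I1 \<union> I2)" by (rule mu_le)
  also have "\<dots> \<le> card I1 + card I2" by (rule card_Un_le)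
  finally show ?thesis using I1 I2 by simp
qed

lemma mu_empty:
  assumes n: "3 \<le> n" and p: "pwf n p"
  shows "mu n p {} = card (Rem n p)"
proof -
  obtain I where I: "good n p {} I" "card I = mu n p {}" using mu_good by blast
  have "Rem n p \<subseteq> I"
  proof
    fix i assume i: "i \<in> Rem n p"
    obtain \<sigma> f where "crit n (\<sigma>, i, f)" "cons p \<sigma>" using exists_cons[OF n p] i unfolding Rem_def by blast
    moreover have "\<not> csat (\<sigma>, i, f) {}" unfolding csat_def by simp
    ultimately show "i \<in> I" using I(1) unfolding good_def by blast
  qed
  moreover have "I \<subseteq> Rem n p" using I(1) unfolding good_def by blast
  ultimately show ?thesis using I(2) by auto
qed

lemma arith_wl:
  fixes k m :: nat
  assumes "m \<le> 3*k" "3*k < 2*m"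
  shows "2*m*m \<le> 9*(k*(m-k-1)) + 6*m"
proof -
  have km: "k + 1 \<le> m" using assms by linarith
  have "int (k*(m-k-1)) = int k * (int m - int k - 1)" using km by (simp add: of_nat_diff)
  moreover have "(3 * int k - int m) * (2 * int m - 3 * int k) \<ge> 0" using assms by (intro mult_nonneg_nonneg) linarith+
  ultimately have "2 * int m * int m \<le> 9 * int (k*(m-k-1)) + 6 * int m"
    using assms by (simp add: algebra_simps)
  then have "int (2*m*m) \<le> int (9*(k*(m-k-1)) + 6*m)" by simp
  then show ?thesis by (simp only: of_nat_le_iff)
qed

lemma Rem_sub: "Rem n p \<subseteq> {1..n}" unfolding Rem_def by blast

lemma width_lemma:
  assumes n: "3 \<le> n" and p: "pwf n p" and R: "refutation (MAP1_cnf n) R" and m4: "4 \<le> card (Rem n p)"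
  shows "\<exists>C \<in> set R. \<not> hit n p C \<and> 2 * card (Rem n p) * card (Rem n p) \<le> 9 * card (Mset n C) + 6 * card (Rem n p)"
proof -
  define m where "m = card (Rem n p)"
  have Rne: "R \<noteq> []" and Rlast: "last R = {}" and
    Rstep: "\<And>i. i < length R \<Longrightarrow> R ! i \<in> MAP1_cnf n \<or> (\<exists>j < i. \<exists>k < i. resolvent (R ! j) (R ! k) (R ! i))"
    using R unfolding refutation_def by auto
  have "R ! (length R - 1) = {}" using Rne Rlast by (simp add: last_conv_nth)
  then have "mu n p (R ! (length R - 1)) = m" using mu_empty[OF n p] m_def by simp
  then have exm: "\<exists>i. i < length R \<and> m \<le> 3 * mu n p (R ! i)" using Rne by (intro exI[of _ "length R - 1"]) auto
  define i0 where "i0 = (LEAST i. i < length R \<and> m \<le> 3 * mu n p (R ! i))"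
  have i0: "i0 < length R" "m \<le> 3 * mu n p (R ! i0)"
    using LeastI_ex[OF exm] unfolding i0_def by blast+
  have lt: "\<And>i. i < i0 \<Longrightarrow> \<not> (i < length R \<and> m \<le> 3 * mu n p (R ! i))"
    unfolding i0_def by (rule not_less_Least)
  have small: "\<And>i. i < i0 \<Longrightarrow> 3 * mu n p (R ! i) < m" using lt i0(1) by fastforce
  define C where "C = R ! i0"
  define k where "k = mu n p C"
  have k1: "m \<le> 3 * k" using i0 C_def k_def by simp
  have k2: "3 * k < 2 * m"
  proof (cases "R ! i0 \<in> MAP1_cnf n")
    case True
    then have "mu n p (R ! i0) \<le> 1" using mu_axiom[OF n] by blast
    then show ?thesis using k1 m4 m_def C_def k_def by simp
  next
    case False
    then obtain j1 j2 where j: "j1 < i0" "j2 < i0" "resolvent (R ! j1) (R ! j2) (R ! i0)" using Rstep[OF i0(1)] by blast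
    have "mu n p (R ! i0) \<le> mu n p (R ! j1) + mu n p (R ! j2)" using mu_res[OF j(3)] .
    moreover have "k = mu n p (R ! i0)" using C_def k_def by simp
    ultimately show ?thesis using small[OF j(1)] small[OF j(2)] by linarith
  qed
  obtain I where I: "good n p C I" "card I = k" using mu_good k_def by blast
  have IR: "I \<subseteq> Rem n p" using I unfolding good_def by blast
  have fI: "finite I" using IR finite_Rem finite_subset by blast
  have exi: "\<exists>x. crit n (fst x, i, snd x) \<and> cons p (fst x) \<and> \<not> csat (fst x, i, snd x) C" if iI: "i \<in> I" for i
  proof (rule ccontr)
    assume nx: "\<not> ?thesis"
    have "good n p C (I - {i})"
    proof -
      have "\<forall>\<sigma> f. crit n (\<sigma>, i, f) \<and> cons p \<sigma> \<longrightarrow> csat (\<sigma>, i, f) C"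
      proof (intro allI impI)
        fix \<sigma> f assume a: "crit n (\<sigma>, i, f) \<and> cons p \<sigma>"
        show "csat (\<sigma>, i, f) C"
        proof (rule ccontr)
          assume "\<not> csat (\<sigma>, i, f) C"
          then have "\<exists>x. crit n (fst x, i, snd x) \<and> cons p (fst x) \<and> \<not> csat (fst x, i, snd x) C"
            using a by (intro exI[of _ "(\<sigma>, f)"]) simp
          then show False using nx by blast
        qed
      qed
      then show ?thesis using I(1) unfolding good_def by blast
    qed
    then have "k \<le> card (I - {i})" using mu_le[of n p C "I - {i}"] k_def by simp
    moreover have "card (I - {i}) < card I" using iI fI by (meson card_Diff1_less)
    ultimately show False using I(2) by simp
  qed
  define sel where "sel i = (SOME x. crit n (fst x, i, snd x) \<and> cons p (fst x) \<and> \<not> csat (fst x, i, snd x) C)" for i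
  have sel: "\<forall>i\<in>I. crit n (fst (sel i), i, snd (sel i)) \<and> cons p (fst (sel i)) \<and> \<not> csat (fst (sel i), i, snd (sel i)) C"
  proof
    fix i assume "i \<in> I"
    from exi[OF this] show "crit n (fst (sel i), i, snd (sel i)) \<and> cons p (fst (sel i)) \<and> \<not> csat (fst (sel i), i, snd (sel i)) C"
      unfolding sel_def by (rule someI_ex)
  qed
  define H where "H i = {h \<in> {1..n-1}. 2 \<le> h \<and> fst (sel i) h \<in> Rem n p - I}" for i
  have sub: "Sigma I H \<subseteq> Mset n C"
  proof
    fix x assume "x \<in> Sigma I H"
    then obtain i h where x: "x = (i, h)" "i \<in> I" "h \<in> H i" by blast
    define \<sigma> where "\<sigma> = fst (sel i)"
    define f where "f = snd (sel i)"
    have c: "crit n (\<sigma>, i, f)" and cs: "cons p \<sigma>" and nf: "\<not> csat (\<sigma>, i, f) C"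
      using sel x(2) \<sigma>_def f_def by auto
    have h: "h \<in> {1..n-1}" "2 \<le> h" "\<sigma> h \<in> Rem n p - I" using x(3) H_def \<sigma>_def by auto
    define j where "j = \<sigma> h"
    have c': "crit n (\<sigma>(h := i), j, h)" using crit_swap[OF c h(1) h(2)] j_def by simp
    have cs': "cons p (\<sigma>(h := i))" unfolding cons_def
    proof (intro allI impI)
      fix h' assume ph: "p h' \<noteq> 0"
      have "h' \<noteq> h"
      proof
        assume "h' = h"
        then have "\<sigma> h = p h" using cs ph unfolding cons_def by auto
        then have "\<sigma> h \<in> p ` pdom p" using ph \<open>h' = h\<close> unfolding pdom_def by auto
        then show False using h(3) unfolding Rem_def by blast
      qed
      then show "(\<sigma>(h := i)) h' = p h'" using cs ph unfolding cons_def by auto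
    qed
    have "j \<notin> I" using h(3) j_def by blast
    then have s': "csat (\<sigma>(h := i), j, h) C" using I(1) c' cs' unfolding good_def by blast
    have "\<forall>\<tau> i' f'. crit n (\<tau>, i', f') \<and> \<tau> h = i \<longrightarrow> csat (\<tau>, i', f') C"
      using swap_lemma[OF c h(1) j_def[symmetric] nf s'] by blast
    moreover have "i \<in> {1..n}" using x(2) IR Rem_sub by blast
    ultimately show "x \<in> Mset n C" unfolding x(1) Mset_def mem_Collect_eq case_prod_conv using h(1) by blast
  qed
  have cardH: "m - k - 1 \<le> card (H i)" if iI: "i \<in> I" for i
  proof -
    define \<sigma> where "\<sigma> = fst (sel i)"
    have c: "crit n (\<sigma>, i, snd (sel i))" using sel iI \<sigma>_def by auto
    define B where "B = Rem n p - I"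
    define G where "G = {h \<in> {1..n-1}. \<sigma> h \<in> B}"
    have BL: "B \<subseteq> \<sigma> ` {1..n-1}" using crit_facts(5)[OF c] Rem_sub iI unfolding B_def by blast
    have img: "\<sigma> ` G = B"
    proof
      show "\<sigma> ` G \<subseteq> B" unfolding G_def by blast
      show "B \<subseteq> \<sigma> ` G"
      proof
        fix b assume b: "b \<in> B"
        then obtain h where h: "h \<in> {1..n-1}" "b = \<sigma> h" using BL by blast
        then have "h \<in> G" unfolding G_def using b by simp
        then show "b \<in> \<sigma> ` G" using h(2) by blast
      qed
    qed
    have inj: "inj_on \<sigma> G" using crit_facts(4)[OF c] unfolding G_def by (rule inj_on_subset) blast
    have cG: "card G = card B" using card_image[OF inj] img by simp
    have cB: "card B = m - k" unfolding B_def m_def using IR fI I(2) by (simp add: card_Diff_subset)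
    have HG: "H i = G - {1}"
    proof (rule set_eqI)
      fix h show "h \<in> H i \<longleftrightarrow> h \<in> G - {1}"
        unfolding H_def G_def B_def \<sigma>_def mem_Collect_eq by (cases "h = 1") auto
    qed
    have "card G - card {1::nat} \<le> card (G - {1})" by (rule diff_card_le_card_Diff) simp
    then show ?thesis using HG cG cB by simp
  qed
  have fH: "\<forall>i\<in>I. finite (H i)" unfolding H_def by simp
  have "k * (m - k - 1) \<le> (\<Sum>i\<in>I. card (H i))"
  proof -
    have "(\<Sum>i\<in>I. m - k - 1) \<le> (\<Sum>i\<in>I. card (H i))" using cardH by (rule sum_mono)
    then show ?thesis using I(2) by simp
  qed
  also have "\<dots> = card (Sigma I H)" using fI fH by simp
  also have "\<dots> \<le> card (Mset n C)"
  proof (rule card_mono)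
    show "finite (Mset n C)" by (rule finite_subset[of _ "{1..n} \<times> {1..n-1}"]) (auto simp: Mset_def)
  qed (rule sub)
  finally have wide: "k * (m - k - 1) \<le> card (Mset n C)" .
  have ar: "2*m*m \<le> 9*(k*(m-k-1)) + 6*m" using arith_wl[OF k1 k2] .
  have nh: "\<not> hit n p C"
  proof
    assume "hit n p C"
    then obtain h where h: "p h \<noteq> 0" "(p h, h) \<in> Mset n C" unfolding hit_def by blast
    have "I \<noteq> {}" using I(2) k1 m4 m_def by auto
    then obtain i where iI: "i \<in> I" by blast
    have c: "crit n (fst (sel i), i, snd (sel i))" and cs: "cons p (fst (sel i))"
      and nf: "\<not> csat (fst (sel i), i, snd (sel i)) C" using sel iI by auto
    have "fst (sel i) h = p h" using cs h(1) unfolding cons_def by auto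
    then have "csat (fst (sel i), i, snd (sel i)) C" using h(2) c unfolding Mset_def by blast
    then show False using nf by blast
  qed
  have "C \<in> set R" using i0(1) C_def by simp
  then show ?thesis using nh wide ar m_def by (intro bexI[of _ C]) auto
qed

definition Wd :: "nat \<Rightarrow> (action \<times> nat) clause list \<Rightarrow> nat \<Rightarrow> (action \<times> nat) clause set" where
  "Wd n R w = {C \<in> set R. w \<le> card (Mset n C)}"

definition Ud :: "nat \<Rightarrow> (action \<times> nat) clause list \<Rightarrow> nat \<Rightarrow> (nat \<Rightarrow> nat) \<Rightarrow> (action \<times> nat) clause set" where
  "Ud n R w p = {C \<in> Wd n R w. \<not> hit n p C}"

lemma finite_Mset: "finite (Mset n C)"
  by (rule finite_subset[of _ "{1..n} \<times> {1..n-1}"]) (auto simp: Mset_def)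

lemma Mset_sub: "Mset n C \<subseteq> {1..n} \<times> {1..n-1}"
  by (auto simp: Mset_def)

lemma double_count:
  assumes "finite U" "finite P"
  shows "(\<Sum>C\<in>U. card (M C \<inter> P)) = (\<Sum>x\<in>P. card {C \<in> U. x \<in> M C})"
proof -
  have "\<And>C. card (M C \<inter> P) = (\<Sum>x\<in>P. if x \<in> M C then 1 else 0)"
  proof -
    fix C
    have "M C \<inter> P = {x \<in> P. x \<in> M C}" by blast
    then have "card (M C \<inter> P) = (\<Sum>x\<in>{x \<in> P. x \<in> M C}. 1)" by simp
    also have "\<dots> = (\<Sum>x\<in>P. if x \<in> M C then 1 else 0)" using assms(2) by (rule sum.inter_filter)
    finally show "card (M C \<inter> P) = (\<Sum>x\<in>P. if x \<in> M C then 1 else 0)" .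
  qed
  moreover have "\<And>x. card {C \<in> U. x \<in> M C} = (\<Sum>C\<in>U. if x \<in> M C then 1 else 0)"
  proof -
    fix x
    have "card {C \<in> U. x \<in> M C} = (\<Sum>C\<in>{C \<in> U. x \<in> M C}. 1)" by simp
    also have "\<dots> = (\<Sum>C\<in>U. if x \<in> M C then 1 else 0)" using assms(1) by (rule sum.inter_filter)
    finally show "card {C \<in> U. x \<in> M C} = (\<Sum>C\<in>U. if x \<in> M C then 1 else 0)" .
  qed
  ultimately show ?thesis by (simp add: sum.swap[of _ U P])
qed

lemma greedy_step:
  assumes n: "2 \<le> n" and p: "pwf n p" and d: "card (pdom p) = d"
    and Une: "Ud n R w p \<noteq> {}" and wc: "n * n + 40 * n * d \<le> 20 * w"
  shows "\<exists>p'. pwf n p' \<and> card (pdom p') \<le> d + 1 \<and> 20 * card (Ud n R w p') \<le> 19 * card (Ud n R w p)"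
proof -
  let ?U = "Ud n R w p"
  let ?D = "pdom p"
  define P where "P = ({1..n} - p ` ?D) \<times> ({1..n-1} - ?D)"
  have fU: "finite ?U" unfolding Ud_def Wd_def by simp
  have fP: "finite P" unfolding P_def by simp
  have fD: "finite ?D" using pdom_sub[OF p] finite_subset by blast
  have cardP: "card P \<le> n * n"
  proof -
    have "card P \<le> card ({1..n::nat} \<times> {1..n-1::nat})" unfolding P_def by (rule card_mono) auto
    also have "\<dots> = n * (n - 1)" by simp
    also have "\<dots> \<le> n * n" by simp
    finally show ?thesis .
  qed
  have each: "w \<le> card (Mset n C \<inter> P) + 2 * n * d" if C: "C \<in> ?U" for C
  proof -
    have wC: "w \<le> card (Mset n C)" using C unfolding Ud_def Wd_def by simp
    have "Mset n C - P \<subseteq> (p ` ?D \<times> {1..n-1}) \<union> ({1..n} \<times> ?D)"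
      using Mset_sub[of n C] unfolding P_def by blast
    then have "card (Mset n C - P) \<le> card ((p ` ?D \<times> {1..n-1}) \<union> ({1..n} \<times> ?D))"
      by (intro card_mono) (use fD in auto)
    also have "\<dots> \<le> card (p ` ?D \<times> {1..n-1}) + card ({1..n::nat} \<times> ?D)" by (rule card_Un_le)
    also have "\<dots> \<le> d * (n - 1) + n * d"
    proof -
      have "card (p ` ?D) \<le> d" using card_image_le[OF fD, of p] d by simp
      then have "card (p ` ?D \<times> {1..n-1}) \<le> d * (n - 1)" by (simp add: card_cartesian_product)
      moreover have "card ({1..n::nat} \<times> ?D) = n * d" using d by (simp add: card_cartesian_product)
      ultimately show ?thesis by simp
    qed
    also have "\<dots> \<le> 2 * n * d" by (simp add: algebra_simps diff_le_self)
    finally have a: "card (Mset n C - P) \<le> 2 * n * d" .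
    have "card (Mset n C) \<le> card (Mset n C \<inter> P) + card (Mset n C - P)"
    proof -
      have "Mset n C = (Mset n C \<inter> P) \<union> (Mset n C - P)" by blast
      then have "card (Mset n C) = card ((Mset n C \<inter> P) \<union> (Mset n C - P))" by simp
      also have "\<dots> \<le> card (Mset n C \<inter> P) + card (Mset n C - P)" by (rule card_Un_le)
      finally show ?thesis .
    qed
    then show ?thesis using wC a by linarith
  qed
  have sumU: "card ?U * (w - 2 * n * d) \<le> (\<Sum>C\<in>?U. card (Mset n C \<inter> P))"
  proof -
    have "(\<Sum>C\<in>?U. w - 2 * n * d) \<le> (\<Sum>C\<in>?U. card (Mset n C \<inter> P))"
      by (rule sum_mono) (use each in force)
    then show ?thesis by (simp add: mult.commute)
  qed
  have big: "card ?U * (n * n) \<le> 20 * (\<Sum>C\<in>?U. card (Mset n C \<inter> P))"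
  proof -
    have "n * n \<le> 20 * (w - 2 * n * d)" using wc by simp
    then have "card ?U * (n * n) \<le> card ?U * (20 * (w - 2 * n * d))" by (rule mult_le_mono2)
    also have "\<dots> = 20 * (card ?U * (w - 2 * n * d))" by simp
    also have "\<dots> \<le> 20 * (\<Sum>C\<in>?U. card (Mset n C \<inter> P))" using sumU by simp
    finally show ?thesis .
  qed
  have cU: "0 < card ?U" using Une fU by (simp add: card_gt_0_iff)
  have "\<exists>x\<in>P. card ?U \<le> 20 * card {C \<in> ?U. x \<in> Mset n C}"
  proof (rule ccontr)
    assume "\<not> ?thesis"
    then have lt: "\<And>x. x \<in> P \<Longrightarrow> 20 * card {C \<in> ?U. x \<in> Mset n C} < card ?U" by force
    show False
    proof (cases "P = {}")
      case True
      then have "(\<Sum>C\<in>?U. card (Mset n C \<inter> P)) = 0" by simp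
      then show False using big cU n by simp
    next
      case False
      have "20 * (\<Sum>x\<in>P. card {C \<in> ?U. x \<in> Mset n C}) = (\<Sum>x\<in>P. 20 * card {C \<in> ?U. x \<in> Mset n C})"
        by (simp add: sum_distrib_left)
      also have "\<dots> < (\<Sum>x\<in>P. card ?U)" using fP False lt by (intro sum_strict_mono) auto
      also have "\<dots> = card P * card ?U" by simp
      also have "\<dots> \<le> n * n * card ?U" using cardP by simp
      finally have "20 * (\<Sum>C\<in>?U. card (Mset n C \<inter> P)) < n * n * card ?U"
        using double_count[OF fU fP, of "Mset n"] by simp
      then show False using big by (simp add: mult.commute)
    qed
  qed
  then obtain j h where jh: "(j, h) \<in> P" "card ?U \<le> 20 * card {C \<in> ?U. (j, h) \<in> Mset n C}" by auto
  have j: "j \<in> {1..n}" "j \<notin> p ` ?D" and h: "h \<in> {1..n-1}" "h \<notin> ?D" using jh(1) unfolding P_def by auto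
  have ph: "p h = 0" using h(2) unfolding pdom_def by simp
  define p' where "p' = p(h := j)"
  have dom': "pdom p' = insert h ?D" using j unfolding p'_def pdom_def by auto
  have pwf': "pwf n p'"
  proof -
    have "\<forall>h'. p' h' \<noteq> 0 \<longrightarrow> h' \<in> {1..n-1} \<and> p' h' \<le> n" using p h j unfolding p'_def pwf_def by auto
    moreover have "inj_on p' {h'. p' h' \<noteq> 0}"
    proof -
      have "inj_on p ?D" using p unfolding pwf_def pdom_def by simp
      then have i1: "inj_on p' ?D" unfolding p'_def using h(2) by (simp add: inj_on_def)
      have "j \<notin> p' ` (?D - {h})" using j(2) h(2) unfolding p'_def by auto
      moreover have "p' h = j" unfolding p'_def by simp
      ultimately have "inj_on p' (insert h ?D)" using i1 by (simp add: h(2))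
      then show ?thesis using dom' unfolding pdom_def by simp
    qed
    ultimately show ?thesis unfolding pwf_def by blast
  qed
  have cd: "card (pdom p') \<le> d + 1" using dom' fD d by (simp add: card_insert_if)
  have Usub: "Ud n R w p' \<subseteq> ?U - {C \<in> ?U. (j, h) \<in> Mset n C}"
  proof
    fix C assume C: "C \<in> Ud n R w p'"
    then have nh: "\<not> hit n p' C" and CW: "C \<in> Wd n R w" unfolding Ud_def by auto
    have "\<not> hit n p C"
    proof
      assume "hit n p C"
      then obtain h' where h': "p h' \<noteq> 0" "(p h', h') \<in> Mset n C" unfolding hit_def by blast
      then have "h' \<noteq> h" using ph by auto
      then have "p' h' = p h'" unfolding p'_def by simp
      then have "hit n p' C" using h' unfolding hit_def by metis
      then show False using nh by blast
    qed
    moreover have "(j, h) \<notin> Mset n C"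
    proof
      assume "(j, h) \<in> Mset n C"
      moreover have "p' h = j" "p' h \<noteq> 0" using j unfolding p'_def by auto
      ultimately have "hit n p' C" unfolding hit_def by metis
      then show False using nh by blast
    qed
    ultimately show "C \<in> ?U - {C \<in> ?U. (j, h) \<in> Mset n C}" using CW unfolding Ud_def by blast
  qed
  have "card (Ud n R w p') \<le> card (?U - {C \<in> ?U. (j, h) \<in> Mset n C})"
    using Usub fU by (intro card_mono) auto
  also have "\<dots> = card ?U - card {C \<in> ?U. (j, h) \<in> Mset n C}"
    using fU by (intro card_Diff_subset) auto
  finally have "20 * card (Ud n R w p') \<le> 19 * card ?U" using jh(2) by linarith
  then show ?thesis using pwf' cd by blast
qed

lemma pwf_zero: "pwf n (\<lambda>_. 0)" unfolding pwf_def by simp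

lemma greedy:
  assumes n: "2 \<le> n" and wc: "n * n + 40 * n * s0 \<le> 20 * w"
  shows "s \<le> s0 \<Longrightarrow> \<exists>p. pwf n p \<and> card (pdom p) \<le> s \<and> 20 ^ s * card (Ud n R w p) \<le> 19 ^ s * card (Wd n R w)"
proof (induction s)
  case 0
  have "card (Ud n R w (\<lambda>_. 0)) \<le> card (Wd n R w)"
    by (rule card_mono) (auto simp: Wd_def Ud_def)
  moreover have "pdom (\<lambda>_. 0::nat) = {}" unfolding pdom_def by simp
  ultimately show ?case using pwf_zero[of n] by (intro exI[of _ "\<lambda>_. 0"]) simp
next
  case (Suc s)
  then obtain p where p: "pwf n p" "card (pdom p) \<le> s" "20 ^ s * card (Ud n R w p) \<le> 19 ^ s * card (Wd n R w)"
    by auto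
  show ?case
  proof (cases "Ud n R w p = {}")
    case True
    then show ?thesis using p by (intro exI[of _ p]) simp
  next
    case False
    define d where "d = card (pdom p)"
    have "d < s0" using p(2) Suc.prems d_def by simp
    then have "40 * n * d \<le> 40 * n * s0" by simp
    then have wc': "n * n + 40 * n * d \<le> 20 * w" using wc by linarith
    obtain p' where p': "pwf n p'" "card (pdom p') \<le> d + 1" "20 * card (Ud n R w p') \<le> 19 * card (Ud n R w p)"
      using greedy_step[OF n p(1) d_def[symmetric] False wc'] by blast
    have "20 ^ Suc s * card (Ud n R w p') = 20 ^ s * (20 * card (Ud n R w p'))" by simp
    also have "\<dots> \<le> 20 ^ s * (19 * card (Ud n R w p))" using p'(3) by simp
    also have "\<dots> = 19 * (20 ^ s * card (Ud n R w p))" by simp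
    also have "\<dots> \<le> 19 * (19 ^ s * card (Wd n R w))" using p(3) by simp
    also have "\<dots> = 19 ^ Suc s * card (Wd n R w)" by simp
    finally show ?thesis using p' p(2) d_def by (intro exI[of _ p']) auto
  qed
qed

lemma lower_nat:
  assumes n: "80 \<le> n" and R: "refutation (MAP1_cnf n) R"
  shows "20 ^ (n div 40) \<le> 19 ^ (n div 40) * length R"
proof -
  define s0 where "s0 = n div 40"
  define w where "w = n * n div 10 + 1"
  have s0n: "40 * s0 \<le> n" unfolding s0_def by simp
  have w10: "n * n < 10 * w" unfolding w_def by simp
  have w10': "10 * w \<le> n * n + 10" unfolding w_def by simp
  have "40 * n * s0 \<le> n * n" using s0n by (metis mult.assoc mult.commute mult_le_mono2)
  then have wc: "n * n + 40 * n * s0 \<le> 20 * w" using w10 by linarith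
  obtain p where p: "pwf n p" "card (pdom p) \<le> s0" "20 ^ s0 * card (Ud n R w p) \<le> 19 ^ s0 * card (Wd n R w)"
    using greedy[OF _ wc, of s0 R] n by auto
  have fD: "finite (pdom p)" using pdom_sub[OF p(1)] finite_subset by blast
  have injp: "inj_on p (pdom p)" using p(1) unfolding pwf_def pdom_def by simp
  have usub: "p ` pdom p \<subseteq> {1..n}" using p(1) unfolding pwf_def pdom_def by auto
  define m where "m = card (Rem n p)"
  have m: "m = n - card (pdom p)" unfolding m_def Rem_def
    using card_Diff_subset[OF finite_subset[OF usub] usub] card_image[OF injp] by simp
  have mn: "m \<le> n" "n \<le> m + s0" using m p(2) by auto
  have m4: "4 \<le> card (Rem n p)" using mn s0n n m_def by linarith
  obtain C where C: "C \<in> set R" "\<not> hit n p C" "2 * m * m \<le> 9 * card (Mset n C) + 6 * m"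
    using width_lemma[OF _ p(1) R m4] n m_def by auto
  have "w \<le> card (Mset n C)"
  proof -
    have hm: "39 * n \<le> 40 * m" using mn s0n by linarith
    have sq: "(39 * n) * (39 * n) \<le> (40 * m) * (40 * m)" using mult_le_mono[OF hm hm] .
    have nn: "80 * n \<le> n * n" using n by simp
    have "1521 * (n * n) \<le> 1600 * (m * m)" using sq by (simp add: algebra_simps)
    moreover have "2 * m * m = 2 * (m * m)" by simp
    ultimately show ?thesis using C(3) w10' nn mn(1) n by linarith
  qed
  then have "C \<in> Ud n R w p" using C unfolding Ud_def Wd_def by simp
  then have ne: "Ud n R w p \<noteq> {}" by blast
  have "finite (Ud n R w p)" unfolding Ud_def Wd_def by simp
  then have "1 \<le> card (Ud n R w p)" using ne by (simp add: Suc_le_eq card_gt_0_iff)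
  then have "20 ^ s0 \<le> 19 ^ s0 * card (Wd n R w)" using p(3)
    by (metis le_trans mult_le_mono2 nat_mult_1_right)
  also have "card (Wd n R w) \<le> length R"
  proof -
    have "card (Wd n R w) \<le> card (set R)" unfolding Wd_def by (rule card_mono) auto
    also have "\<dots> \<le> length R" by (rule card_length)
    finally show ?thesis .
  qed
  then have "19 ^ s0 * card (Wd n R w) \<le> 19 ^ s0 * length R" by simp
  finally show ?thesis unfolding s0_def .
qed

theorem theorem6:
  shows "\<exists>c::real > 1. \<exists>N::nat. \<forall>n \<ge> N. \<forall>R.
           refutation (MAP1_cnf n) R \<longrightarrow> c ^ n \<le> real (length R)"
proof (intro exI[of _ "(20/19::real) powr (1/80)"] conjI exI[of _ "80::nat"] allI impI)
  show "1 < (20/19::real) powr (1/80)" by simp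
  fix n :: nat and R
  assume n: "80 \<le> n" and R: "refutation (MAP1_cnf n) R"
  define s where "s = n div 40"
  have nat: "20 ^ s \<le> 19 ^ s * length R" using lower_nat[OF n R] s_def by simp
  have "real (20 ^ s) \<le> real (19 ^ s * length R)" using nat by (simp only: of_nat_le_iff)
  then have r: "(20::real) ^ s \<le> 19 ^ s * real (length R)" by simp
  have q: "(20/19::real) ^ s \<le> real (length R)"
    using r by (simp add: power_divide divide_le_eq mult.commute)
  have sn: "real n / 80 \<le> real s"
  proof -
    have "n \<le> 80 * s" unfolding s_def using n by linarith
    then show ?thesis by simp
  qed
  have "((20/19::real) powr (1/80)) ^ n = ((20/19::real) powr (1/80)) powr (real n)"
    by (simp add: powr_realpow)
  also have "\<dots> = (20/19::real) powr (real n / 80)" by (simp add: powr_powr)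
  also have "\<dots> \<le> (20/19::real) powr (real s)" using sn by (intro powr_mono) auto
  also have "\<dots> = (20/19::real) ^ s" by (simp add: powr_realpow)
  also have "\<dots> \<le> real (length R)" using q .
  finally show "((20/19::real) powr (1/80)) ^ n \<le> real (length R)" .
qed

end
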